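(* Let $X$ be a toric Fano variety. If $\Sigma_X$ has two different primitive relations $x+y=z$ and $x+w=v$ (with $x,y,z,w,v\in G(\Sigma_X)$), then $w=-x-y$ and $v=-y$. Consequently there are at most two primitive collections of order $2$ and degree $1$ containing $x$, and if there are two, say $\{x,y\}$ and $\{x,w\}$, the associated primitive relations are $x+y=(-w)$ and $x+w=(-y)$.
   Context: $X$ is a smooth projective toric variety with ample anticanonical divisor, fan $\Sigma_X$, primitive ray generators $G(\Sigma_X)$. A primitive collection is a set of generators not spanning a cone of $\Sigma_X$ while every proper subset does; for $\{x_1,\dots,x_h\}$ with $x_1+\dots+x_h$ in the relative interior of the cone $\langle y_1,\dots,y_k\rangle$, the primitive relation is $x_1+\dots+x_h=a_1y_1+\dots+a_ky_k$ ($a_i$ positive integers) and the degree is $h-\sum a_i$. "$x+y=z$ is a primitive relation" means $\{x,y\}$ is a primitive collection with this relation. *)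

theory Defs
  imports "HOL-Analysis.Analysis"
begin

text \<open>Lattice N = Z^n inside real^n. A smooth (hence simplicial) fan is represented by the
set of generator sets of its cones; the cone of a generator set S is its nonnegative span.\<close>

definition lattice_pt :: "real^'n \<Rightarrow> bool" where
  "lattice_pt v \<longleftrightarrow> (\<forall>i. v $ i \<in> \<int>)"

definition cone_of :: "(real^'n) set \<Rightarrow> (real^'n) set" where
  "cone_of S = {\<Sum>u\<in>S. c u *\<^sub>R u | c. \<forall>u\<in>S. c u \<ge> 0}"

text \<open>A cone generated by S is smooth: S is part of a Z-basis of the lattice,
i.e. S consists of lattice points, is linearly independent, and every lattice point
in the real span of S is an integral combination of S.\<close>
definition smooth_cone :: "(real^'n) set \<Rightarrow> bool" where
  "smooth_cone S \<longleftrightarrow> finite S \<and> (\<forall>u\<in>S. lattice_pt u) \<and> independent S \<and>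
     (\<forall>v. lattice_pt v \<and> v \<in> span S \<longrightarrow> (\<exists>c::real^'n \<Rightarrow> int. v = (\<Sum>u\<in>S. of_int (c u) *\<^sub>R u)))"

definition smooth_complete_fan :: "(real^'n) set set \<Rightarrow> bool" where
  "smooth_complete_fan \<Sigma> \<longleftrightarrow> finite \<Sigma> \<and> {} \<in> \<Sigma> \<and>
     (\<forall>S\<in>\<Sigma>. smooth_cone S) \<and>
     (\<forall>S\<in>\<Sigma>. \<forall>T. T \<subseteq> S \<longrightarrow> T \<in> \<Sigma>) \<and>
     (\<forall>S\<in>\<Sigma>. \<forall>T\<in>\<Sigma>. cone_of S \<inter> cone_of T = cone_of (S \<inter> T)) \<and>
     (\<Union>S\<in>\<Sigma>. cone_of S) = UNIV"

definition gens :: "(real^'n) set set \<Rightarrow> (real^'n) set" where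
  "gens \<Sigma> = \<Union>\<Sigma>"

text \<open>Smooth projective toric variety with ample anticanonical divisor (toric Fano):
the support function of -K (value 1 on every primitive generator, linear on cones) is
strictly convex, i.e. for every maximal cone S there is a linear functional m with
m.u = 1 on S and m.u < 1 for all other generators.  (This is the standard toric
ampleness criterion; it also gives projectivity.)\<close>
definition toric_fano :: "(real^'n) set set \<Rightarrow> bool" where
  "toric_fano \<Sigma> \<longleftrightarrow> smooth_complete_fan \<Sigma> \<and>
     (\<forall>S\<in>\<Sigma>. card S = CARD('n) \<longrightarrow>
        (\<exists>m::real^'n. (\<forall>u\<in>S. m \<bullet> u = 1) \<and> (\<forall>u\<in>gens \<Sigma> - S. m \<bullet> u < 1)))"

definition primitive_collection :: "(real^'n) set set \<Rightarrow> (real^'n) set \<Rightarrow> bool" where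
  "primitive_collection \<Sigma> P \<longleftrightarrow> P \<subseteq> gens \<Sigma> \<and> P \<notin> \<Sigma> \<and> (\<forall>Q. Q \<subset> P \<longrightarrow> Q \<in> \<Sigma>)"

text \<open>Primitive relation: sum of P lies in the relative interior of the cone K (of Sigma),
sum P = sum_{y in K} a_y y with positive integers a_y.\<close>
definition primitive_relation ::
  "(real^'n) set set \<Rightarrow> (real^'n) set \<Rightarrow> (real^'n) set \<Rightarrow> (real^'n \<Rightarrow> nat) \<Rightarrow> bool" where
  "primitive_relation \<Sigma> P K a \<longleftrightarrow> primitive_collection \<Sigma> P \<and> K \<in> \<Sigma> \<and>
     (\<forall>y\<in>K. a y > 0) \<and> (\<Sum>x\<in>P. x) = (\<Sum>y\<in>K. of_nat (a y) *\<^sub>R y)"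

definition prim_rel2 :: "(real^'n) set set \<Rightarrow> real^'n \<Rightarrow> real^'n \<Rightarrow> real^'n \<Rightarrow> bool" where
  "prim_rel2 \<Sigma> x y z \<longleftrightarrow> x \<noteq> y \<and> primitive_relation \<Sigma> {x, y} {z} (\<lambda>_. 1)"

definition prim_degree :: "(real^'n) set set \<Rightarrow> (real^'n) set \<Rightarrow> int \<Rightarrow> bool" where
  "prim_degree \<Sigma> P d \<longleftrightarrow> (\<exists>K a. primitive_relation \<Sigma> P K a \<and>
      d = int (card P) - (\<Sum>y\<in>K. int (a y)))"

end

theory Submission
  imports Defs
begin

lemma fan_parts:
  fixes \<Sigma> :: "(real^'n) set set"
  assumes "smooth_complete_fan \<Sigma>"
  shows "finite \<Sigma>" "\<forall>S\<in>\<Sigma>. smooth_cone S" "\<forall>S\<in>\<Sigma>. \<forall>T. T \<subseteq> S \<longrightarrow> T \<in> \<Sigma>"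
    "\<forall>S\<in>\<Sigma>. \<forall>T\<in>\<Sigma>. cone_of S \<inter> cone_of T = cone_of (S \<inter> T)"
    "(\<Union>S\<in>\<Sigma>. cone_of S) = UNIV"
proof -
  have h: "finite \<Sigma> \<and> {} \<in> \<Sigma> \<and>
     (\<forall>S\<in>\<Sigma>. smooth_cone S) \<and>
     (\<forall>S\<in>\<Sigma>. \<forall>T. T \<subseteq> S \<longrightarrow> T \<in> \<Sigma>) \<and>
     (\<forall>S\<in>\<Sigma>. \<forall>T\<in>\<Sigma>. cone_of S \<inter> cone_of T = cone_of (S \<inter> T)) \<and>
     (\<Union>S\<in>\<Sigma>. cone_of S) = UNIV"
    using assms[unfolded smooth_complete_fan_def] .
  from h show "finite \<Sigma>" by (elim conjE)
  from h show "\<forall>S\<in>\<Sigma>. smooth_cone S" by (elim conjE)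
  from h show "\<forall>S\<in>\<Sigma>. \<forall>T. T \<subseteq> S \<longrightarrow> T \<in> \<Sigma>" by (elim conjE)
  from h show "\<forall>S\<in>\<Sigma>. \<forall>T\<in>\<Sigma>. cone_of S \<inter> cone_of T = cone_of (S \<inter> T)" by (elim conjE)
  from h show "(\<Union>S\<in>\<Sigma>. cone_of S) = UNIV" by (elim conjE)
qed

lemma fan_cone:
  fixes \<Sigma> :: "(real^'n) set set"
  assumes "smooth_complete_fan \<Sigma>" "S \<in> \<Sigma>"
  shows "finite S" "independent S" "\<forall>u\<in>S. lattice_pt u"
    "\<And>v. lattice_pt v \<Longrightarrow> v \<in> span S \<Longrightarrow> \<exists>c::real^'n \<Rightarrow> int. v = (\<Sum>u\<in>S. of_int (c u) *\<^sub>R u)"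
proof -
  have "smooth_cone S" using fan_parts(2)[OF assms(1)] assms(2) by (rule bspec)
  hence h0: "finite S \<and> (\<forall>u\<in>S. lattice_pt u) \<and> independent S \<and>
     (\<forall>v. lattice_pt v \<and> v \<in> span S \<longrightarrow> (\<exists>c::real^'n \<Rightarrow> int. v = (\<Sum>u\<in>S. of_int (c u) *\<^sub>R u)))"
    unfolding smooth_cone_def .
  note h = h0
  from h show "finite S" by (elim conjE)
  from h show "independent S" by (elim conjE)
  from h show "\<forall>u\<in>S. lattice_pt u" by (elim conjE)
  fix v assume "lattice_pt v" "v \<in> span S"
  with h show "\<exists>c::real^'n \<Rightarrow> int. v = (\<Sum>u\<in>S. of_int (c u) *\<^sub>R u)" by blast
qed

lemma gens_facts:
  fixes \<Sigma> :: "(real^'n) set set"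
  assumes "smooth_complete_fan \<Sigma>" "g \<in> gens \<Sigma>"
  shows "g \<noteq> 0" "lattice_pt g" "{g} \<in> \<Sigma>"
proof -
  obtain S where S: "S \<in> \<Sigma>" "g \<in> S" using assms(2) unfolding gens_def by blast
  show "g \<noteq> 0" using fan_cone(2)[OF assms(1) S(1)] S(2) dependent_zero by blast
  show "lattice_pt g" using fan_cone(3)[OF assms(1) S(1)] S(2) by blast
  show "{g} \<in> \<Sigma>" using fan_parts(3)[OF assms(1)] S by blast
qed

lemma indep_coeff:
  fixes B :: "(real^'n) set"
  assumes "finite B" "independent B" "(\<Sum>b\<in>B. c b *\<^sub>R b) = (\<Sum>b\<in>B. d b *\<^sub>R b)" "b \<in> B"
  shows "c b = d b"
proof (rule ccontr)
  assume ne: "c b \<noteq> d b"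
  have "(\<Sum>b\<in>B. (c b - d b) *\<^sub>R b) = 0" using assms(3) by (simp add: scaleR_diff_left sum_subtractf)
  hence "dependent B" using assms(1,4) ne
    by (subst dependent_finite) (auto intro!: exI[of _ "\<lambda>b. c b - d b"])
  thus False using assms(2) by blast
qed

lemma sum_delta_vec:
  fixes B :: "(real^'n) set"
  assumes "finite B" "p \<in> B"
  shows "(\<Sum>s\<in>B. (if s = p then 1 else 0) *\<^sub>R s) = p"
proof -
  have "(\<Sum>s\<in>B. (if s = p then 1 else 0) *\<^sub>R s) = (\<Sum>s\<in>B. if s = p then p else 0)"
    by (rule sum.cong) auto
  thus ?thesis using assms by simp
qed

lemma four:
  fixes B :: "(real^'n) set"
  assumes "finite B" "independent B" "a \<in> B" "b \<in> B" "c \<in> B" "d \<in> B"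
    "a + b = c + d" "a \<noteq> c" "a \<noteq> d"
  shows False
proof -
  let ?i = "\<lambda>p s. if s = p then 1 else (0::real)"
  have "(\<Sum>s\<in>B. (?i a s + ?i b s) *\<^sub>R s) = a + b"
    using sum_delta_vec[OF assms(1,3)] sum_delta_vec[OF assms(1,4)]
    by (simp add: scaleR_add_left sum.distrib)
  moreover have "(\<Sum>s\<in>B. (?i c s + ?i d s) *\<^sub>R s) = c + d"
    using sum_delta_vec[OF assms(1,5)] sum_delta_vec[OF assms(1,6)]
    by (simp add: scaleR_add_left sum.distrib)
  ultimately have "?i a a + ?i b a = ?i c a + ?i d a"
    using indep_coeff[OF assms(1,2), of "\<lambda>s. ?i a s + ?i b s" "\<lambda>s. ?i c s + ?i d s" a] assms
    by simp
  thus False using assms(8,9) by (auto split: if_splits)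
qed

lemma max_span:
  fixes \<Sigma> :: "(real^'n) set set"
  assumes "smooth_complete_fan \<Sigma>" "T \<in> \<Sigma>" "card T = CARD('n)"
  shows "span T = UNIV"
proof -
  have "UNIV \<subseteq> span T"
    by (rule card_ge_dim_independent) (use fan_cone(2)[OF assms(1,2)] assms(3) in auto)
  thus ?thesis by auto
qed

lemma fano_m:
  fixes \<Sigma> :: "(real^'n) set set"
  assumes fano: "toric_fano \<Sigma>" and T: "T \<in> \<Sigma>" "card T = CARD('n)"
  shows "\<exists>m. (\<forall>g\<in>gens \<Sigma>. (g \<in> T \<longrightarrow> m \<bullet> g = 1) \<and> (g \<notin> T \<longrightarrow> m \<bullet> g \<le> 0))
            \<and> (\<forall>c. m \<bullet> (\<Sum>s\<in>T. c s *\<^sub>R s) = (\<Sum>s\<in>T. c s))"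
proof -
  have h: "smooth_complete_fan \<Sigma> \<and>
     (\<forall>S\<in>\<Sigma>. card S = CARD('n) \<longrightarrow>
        (\<exists>m::real^'n. (\<forall>u\<in>S. m \<bullet> u = 1) \<and> (\<forall>u\<in>gens \<Sigma> - S. m \<bullet> u < 1)))"
    using fano[unfolded toric_fano_def] .
  have fan: "smooth_complete_fan \<Sigma>" using h by (rule conjunct1)
  have "\<exists>m::real^'n. (\<forall>u\<in>T. m \<bullet> u = 1) \<and> (\<forall>u\<in>gens \<Sigma> - T. m \<bullet> u < 1)"
    using h T by blast
  then obtain m where m1: "\<forall>u\<in>T. m \<bullet> u = 1" and m2: "\<forall>u\<in>gens \<Sigma> - T. m \<bullet> u < 1"
    by blast
  have lin: "m \<bullet> (\<Sum>s\<in>T. c s *\<^sub>R s) = (\<Sum>s\<in>T. c s)" for c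
    by (simp add: inner_sum_right m1)
  have "g \<notin> T \<longrightarrow> m \<bullet> g \<le> 0" if g: "g \<in> gens \<Sigma>" for g
  proof
    assume gT: "g \<notin> T"
    have lg: "lattice_pt g" using gens_facts[OF fan g] by blast
    have sg: "g \<in> span T" using max_span[OF fan T] by simp
    obtain c :: "real^'n \<Rightarrow> int" where c: "g = (\<Sum>u\<in>T. of_int (c u) *\<^sub>R u)"
      using fan_cone(4)[OF fan T(1) lg sg] by (elim exE)
    have e: "m \<bullet> g = of_int (\<Sum>u\<in>T. c u)" using lin[of "\<lambda>u. of_int (c u)"] c by simp
    obtain k :: int where k: "m \<bullet> g = of_int k" using e by blast
    have "m \<bullet> g < 1" using m2 g gT by blast
    hence "real_of_int k < 1" using k by simp
    hence "k \<le> 0" by simp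
    hence "real_of_int k \<le> 0" by simp
    thus "m \<bullet> g \<le> 0" using k by simp
  qed
  hence neg: "\<forall>g\<in>gens \<Sigma>. g \<notin> T \<longrightarrow> m \<bullet> g \<le> 0" by blast
  have p1: "\<forall>g\<in>gens \<Sigma>. (g \<in> T \<longrightarrow> m \<bullet> g = 1) \<and> (g \<notin> T \<longrightarrow> m \<bullet> g \<le> 0)"
    using m1 neg by blast
  have p2: "\<forall>c. m \<bullet> (\<Sum>s\<in>T. c s *\<^sub>R s) = (\<Sum>s\<in>T. c s)" using lin by blast
  show ?thesis using p1 p2 by blast
qed

lemma cone_max_char:
  fixes \<Sigma> :: "(real^'n) set set"
  assumes fan: "smooth_complete_fan \<Sigma>" and T: "T \<in> \<Sigma>" "card T = CARD('n)"
  shows "cone_of T = {v. \<forall>s\<in>T. 0 \<le> representation T v s}"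
proof -
  have fin: "finite T" and ind: "independent T" using fan_cone[OF fan T(1)] by auto
  have sp: "span T = UNIV" using max_span[OF fan T] .
  have rep: "(\<Sum>s\<in>T. representation T v s *\<^sub>R s) = v" for v
    using sum_representation_eq[OF ind _ fin] sp by auto
  show ?thesis
  proof (intro set_eqI iffI)
    fix v assume "v \<in> cone_of T"
    then obtain c where c: "v = (\<Sum>u\<in>T. c u *\<^sub>R u)" "\<forall>u\<in>T. c u \<ge> 0"
      unfolding cone_of_def by blast
    have "representation T v s = c s" if "s \<in> T" for s
      using indep_coeff[OF fin ind, of "representation T v" c s] rep[of v] c(1) that by simp
    thus "v \<in> {v. \<forall>s\<in>T. 0 \<le> representation T v s}" using c(2) by auto
  next
    fix v assume "v \<in> {v. \<forall>s\<in>T. 0 \<le> representation T v s}"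
    thus "v \<in> cone_of T" unfolding cone_of_def using rep[of v] by (auto intro!: exI[of _ "representation T v"])
  qed
qed

lemma cone_max_closed:
  fixes \<Sigma> :: "(real^'n) set set"
  assumes fan: "smooth_complete_fan \<Sigma>" and T: "T \<in> \<Sigma>" "card T = CARD('n)"
  shows "closed (cone_of T)"
proof -
  have ind: "independent T" using fan_cone[OF fan T(1)] by auto
  have sp: "span T = UNIV" using max_span[OF fan T] .
  have lin: "linear (\<lambda>v. representation T v s)" for s
  proof (rule linearI)
    fix x y show "representation T (x + y) s = representation T x s + representation T y s"
      using representation_add[OF ind, of y x] sp by simp
  next
    fix r x show "representation T (r *\<^sub>R x) s = r *\<^sub>R representation T x s"
      using representation_scale[OF ind, of x r] sp by simp
  qed
  have cont: "continuous_on UNIV (\<lambda>v. representation T v s)" for s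
    using lin[of s] by (simp add: linear_conv_bounded_linear linear_continuous_on)
  have "cone_of T = (\<Inter>s\<in>T. {v. 0 \<le> representation T v s})"
    using cone_max_char[OF fan T] by auto
  also have "closed \<dots>"
    by (intro closed_INT allI ballI closed_Collect_le continuous_on_const cont)
  finally show ?thesis .
qed

lemma interior_Union_empty:
  fixes \<A> :: "('a::topological_space) set set"
  assumes "finite \<A>" "\<forall>A\<in>\<A>. closed A \<and> interior A = {}"
  shows "interior (\<Union>\<A>) = {}"
  using assms
proof (induction \<A> rule: finite_induct)
  case empty then show ?case by simp
next
  case (insert A \<A>)
  then have "interior (\<Union>\<A>) = {}" by auto
  then have "interior (A \<union> \<Union>\<A>) = interior A"
    using insert.prems by (intro interior_closed_Un_empty_interior) auto
  then show ?case using insert.prems by simp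
qed

lemma cone_sub_span: "cone_of S \<subseteq> span S"
proof
  fix x assume "x \<in> cone_of S"
  then obtain c where "x = (\<Sum>u\<in>S. c u *\<^sub>R u)" unfolding cone_of_def by blast
  moreover have "(\<Sum>u\<in>S. c u *\<^sub>R u) \<in> span S"
    by (rule span_sum, rule span_scale, rule span_base) simp
  ultimately show "x \<in> span S" by simp
qed

lemma exists_max:
  fixes \<Sigma> :: "(real^'n) set set"
  assumes fan: "smooth_complete_fan \<Sigma>"
  shows "\<exists>T\<in>\<Sigma>. card T = CARD('n) \<and> p \<in> cone_of T"
proof (rule ccontr)
  assume np: "\<not> ?thesis"
  have finS: "finite \<Sigma>" using fan_parts(1)[OF fan] .
  define M where "M = \<Union> (cone_of ` {T\<in>\<Sigma>. card T = CARD('n)})"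
  define V where "V = \<Union> (span ` {S\<in>\<Sigma>. card S \<noteq> CARD('n)})"
  have cM: "closed M" unfolding M_def
  proof (rule closed_Union)
    show "finite (cone_of ` {T \<in> \<Sigma>. card T = CARD('n)})" using finS by simp
    show "\<forall>A\<in>cone_of ` {T \<in> \<Sigma>. card T = CARD('n)}. closed A"
      using cone_max_closed[OF fan] by blast
  qed
  have iV: "interior V = {}" unfolding V_def
  proof (rule interior_Union_empty)
    show "finite (span ` {S \<in> \<Sigma>. card S \<noteq> CARD('n)})" using finS by auto
    show "\<forall>A\<in>span ` {S \<in> \<Sigma>. card S \<noteq> CARD('n)}. closed A \<and> interior A = {}"
    proof
      fix A assume "A \<in> span ` {S \<in> \<Sigma>. card S \<noteq> CARD('n)}"
      then obtain S where S: "S \<in> \<Sigma>" "card S \<noteq> CARD('n)" "A = span S" by auto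
      have ind: "independent S" using fan_cone[OF fan S(1)] by auto
      have "card S \<le> DIM(real^'n)" using independent_card_le[OF ind] .
      hence "dim (span S) < DIM(real^'n)" using S(2) dim_eq_card_independent[OF ind] by simp
      hence "interior (span S) = {}" by (rule empty_interior_lowdim)
      thus "closed A \<and> interior A = {}" using S(3) by auto
    qed
  qed
  have cov: "- M \<subseteq> V"
  proof
    fix v assume v: "v \<in> - M"
    have un: "(\<Union>S\<in>\<Sigma>. cone_of S) = UNIV" using fan_parts(5)[OF fan] .
    have "v \<in> (\<Union>S\<in>\<Sigma>. cone_of S)" by (simp add: un)
    then obtain S where S: "S \<in> \<Sigma>" "v \<in> cone_of S" by blast
    have "card S \<noteq> CARD('n)"
    proof
      assume "card S = CARD('n)"
      hence "v \<in> M" unfolding M_def using S by blast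
      thus False using v by simp
    qed
    thus "v \<in> V" unfolding V_def using S cone_sub_span by blast
  qed
  have "- M \<subseteq> interior V" using cov cM by (intro interior_maximal) auto
  moreover have "p \<notin> M"
  proof
    assume "p \<in> M"
    then obtain T where "T \<in> \<Sigma>" "card T = CARD('n)" "p \<in> cone_of T" unfolding M_def by blast
    thus False using np by blast
  qed
  hence "p \<in> - M" by simp
  ultimately show False using iV by auto
qed


lemma wall:
  fixes \<Sigma> :: "(real^'n) set set"
  assumes fan: "smooth_complete_fan \<Sigma>" and T: "T \<in> \<Sigma>" "card T = CARD('n)" and t: "t \<in> T"
  shows "\<exists>T'\<in>\<Sigma>. card T' = CARD('n) \<and> T - {t} \<subseteq> T' \<and> t \<notin> T'"
proof -
  have finS: "finite \<Sigma>" using fan_parts(1)[OF fan] .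
  have finT: "finite T" and indT: "independent T" using fan_cone[OF fan T(1)] by auto
  define F where "F = T - {t}"
  have FS: "F \<in> \<Sigma>" using fan_parts(3)[OF fan] T(1) unfolding F_def by blast
  have finF: "finite F" and indF: "independent F" using fan_cone[OF fan FS] by auto
  define p where "p = (\<Sum>f\<in>F. f)"
  define q where "q \<epsilon> = p - \<epsilon> *\<^sub>R t" for \<epsilon> :: real
  define \<T> where "\<T> = {T'\<in>\<Sigma>. card T' = CARD('n) \<and> (\<exists>\<epsilon>. 0 < \<epsilon> \<and> \<epsilon> \<le> 1 \<and> q \<epsilon> \<in> cone_of T')}"
  have finTT: "finite \<T>" unfolding \<T>_def using finS by auto
  have qc: "continuous_on UNIV q" unfolding q_def by (intro continuous_intros)
  have cl: "closed (\<Union>T'\<in>\<T>. q -` cone_of T')"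
  proof (rule closed_Union)
    show "finite ((\<lambda>T'. q -` cone_of T') ` \<T>)" using finTT by simp
    show "\<forall>A\<in>(\<lambda>T'. q -` cone_of T') ` \<T>. closed A"
    proof
      fix A assume "A \<in> (\<lambda>T'. q -` cone_of T') ` \<T>"
      then obtain T' where "T' \<in> \<T>" "A = q -` cone_of T'" by blast
      moreover have "closed (cone_of T')" using \<open>T' \<in> \<T>\<close> cone_max_closed[OF fan] unfolding \<T>_def by blast
      ultimately show "closed A" using closed_vimage qc by blast
    qed
  qed
  have "{0<..1} \<subseteq> (\<Union>T'\<in>\<T>. q -` cone_of T')"
  proof
    fix \<epsilon> :: real assume e: "\<epsilon> \<in> {0<..1}"
    obtain T' where "T' \<in> \<Sigma>" "card T' = CARD('n)" "q \<epsilon> \<in> cone_of T'" using exists_max[OF fan] by blast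
    thus "\<epsilon> \<in> (\<Union>T'\<in>\<T>. q -` cone_of T')" using e unfolding \<T>_def by auto
  qed
  hence "closure {0<..1::real} \<subseteq> (\<Union>T'\<in>\<T>. q -` cone_of T')" using cl by (rule closure_minimal)
  moreover have "(0::real) \<in> closure {0<..1::real}" by simp
  ultimately have "0 \<in> (\<Union>T'\<in>\<T>. q -` cone_of T')" by blast
  then obtain T' where T'T: "T' \<in> \<T>" and p0: "q 0 \<in> cone_of T'" by auto
  from T'T obtain \<epsilon> where T': "T' \<in> \<Sigma>" "card T' = CARD('n)" and e: "0 < \<epsilon>" "q \<epsilon> \<in> cone_of T'"
    unfolding \<T>_def by auto
  have finT': "finite T'" using fan_cone[OF fan T'(1)] by auto
  have pT': "p \<in> cone_of T'" using p0 unfolding q_def by simp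
  have pF: "p \<in> cone_of F" unfolding cone_of_def p_def by (auto intro!: exI[of _ "\<lambda>_. 1"])
  have "cone_of T' \<inter> cone_of F = cone_of (T' \<inter> F)" using fan_parts(4)[OF fan] T'(1) FS by blast
  hence "p \<in> cone_of (T' \<inter> F)" using pT' pF by blast
  hence "p \<in> cone_of (F \<inter> T')" by (simp add: Int_commute)
  then obtain c where c: "p = (\<Sum>u\<in>F \<inter> T'. c u *\<^sub>R u)" unfolding cone_of_def by blast
  have c2: "p = (\<Sum>u\<in>F. (if u \<in> T' then c u else 0) *\<^sub>R u)"
  proof -
    have "(\<Sum>u\<in>F. (if u \<in> T' then c u else 0) *\<^sub>R u) = (\<Sum>u\<in>F. if u \<in> T' then c u *\<^sub>R u else 0)"
      by (rule sum.cong) auto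
    thus ?thesis using c sum.inter_restrict[OF finF, of "\<lambda>u. c u *\<^sub>R u" T'] by simp
  qed
  have FT': "F \<subseteq> T'"
  proof
    fix f assume f: "f \<in> F"
    have "(if f \<in> T' then c f else 0) = (\<lambda>_. 1::real) f"
      by (rule indep_coeff[OF finF indF _ f]) (simp add: c2[symmetric] p_def)
    thus "f \<in> T'" by (auto split: if_splits)
  qed
  have tT': "t \<notin> T'"
  proof
    assume "t \<in> T'"
    hence "T \<subseteq> T'" using FT' t unfolding F_def by auto
    hence TT: "T = T'" using card_subset_eq[OF finT'] T(2) T'(2) by simp
    from e(2) obtain d where d: "q \<epsilon> = (\<Sum>u\<in>T. d u *\<^sub>R u)" "\<forall>u\<in>T. d u \<ge> 0"
      unfolding cone_of_def TT by blast
    have s1: "(\<Sum>u\<in>T. f u) = f t + (\<Sum>u\<in>F. f u)" for f :: "real^'n \<Rightarrow> real^'n"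
      unfolding F_def by (rule sum.remove[OF finT t])
    have s2: "(\<Sum>u\<in>F. (if u = t then - \<epsilon> else 1) *\<^sub>R u) = p"
      unfolding p_def F_def by (rule sum.cong) auto
    have "q \<epsilon> = (\<Sum>u\<in>T. (if u = t then - \<epsilon> else 1) *\<^sub>R u)"
      unfolding q_def using s1[of "\<lambda>u. (if u = t then - \<epsilon> else 1) *\<^sub>R u"] s2 by simp
    hence "d t = (if t = t then - \<epsilon> else 1)"
      using indep_coeff[OF finT indT, of d "\<lambda>u. if u = t then - \<epsilon> else 1" t] d(1) t by simp
    thus False using d(2) t e(1) by auto
  qed
  show ?thesis using T' FT' tT' unfolding F_def by blast
qed

lemma fano_fan: "toric_fano \<Sigma> \<Longrightarrow> smooth_complete_fan \<Sigma>"
  unfolding toric_fano_def by (rule conjunct1)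

lemma ustep:
  fixes \<Sigma> :: "(real^'n) set set"
  assumes fano: "toric_fano \<Sigma>"
    and g: "x \<in> gens \<Sigma>" "y \<in> gens \<Sigma>" "w \<in> gens \<Sigma>" "z \<in> gens \<Sigma>" "v \<in> gens \<Sigma>" "u \<in> gens \<Sigma>"
    and e: "z = x + y" "v = x + w" "u = z + w"
    and nz: "y \<noteq> 0" "w \<noteq> 0"
    and T: "T \<in> \<Sigma>" "card T = CARD('n)" "u \<in> T"
  shows "(w \<notin> T \<longrightarrow> y \<in> T \<and> z \<in> T) \<and> (y \<notin> T \<longrightarrow> z \<notin> T)"
proof -
  have fan: "smooth_complete_fan \<Sigma>" using fano by (rule fano_fan)
  obtain m where m: "\<forall>g\<in>gens \<Sigma>. (g \<in> T \<longrightarrow> m \<bullet> g = 1) \<and> (g \<notin> T \<longrightarrow> m \<bullet> g \<le> 0)"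
    using fano_m[OF fano T(1,2)] by blast
  have hx: "(x \<in> T \<and> m \<bullet> x = 1) \<or> (x \<notin> T \<and> m \<bullet> x \<le> 0)" using m g(1) by blast
  have hy: "(y \<in> T \<and> m \<bullet> y = 1) \<or> (y \<notin> T \<and> m \<bullet> y \<le> 0)" using m g(2) by blast
  have hw: "(w \<in> T \<and> m \<bullet> w = 1) \<or> (w \<notin> T \<and> m \<bullet> w \<le> 0)" using m g(3) by blast
  have hz: "(z \<in> T \<and> m \<bullet> z = 1) \<or> (z \<notin> T \<and> m \<bullet> z \<le> 0)" using m g(4) by blast
  have hv: "(v \<in> T \<and> m \<bullet> v = 1) \<or> (v \<notin> T \<and> m \<bullet> v \<le> 0)" using m g(5) by blast
  have hu: "m \<bullet> u = 1" using m g(6) T(3) by blast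
  have ez: "m \<bullet> z = m \<bullet> x + m \<bullet> y" using e(1) by (simp add: inner_add_right)
  have ev: "m \<bullet> v = m \<bullet> x + m \<bullet> w" using e(2) by (simp add: inner_add_right)
  have eu: "m \<bullet> u = m \<bullet> z + m \<bullet> w" using e(3) by (simp add: inner_add_right)
  have bad: "\<not> (x \<in> T \<and> z \<in> T \<and> v \<in> T)"
  proof
    assume xzv: "x \<in> T \<and> z \<in> T \<and> v \<in> T"
    have finT: "finite T" and indT: "independent T" using fan_cone[OF fan T(1)] by auto
    have "x + u = z + v" using e by (simp add: algebra_simps)
    moreover have "x \<noteq> z" using e(1) nz(1) by auto
    moreover have "x \<noteq> v" using e(2) nz(2) by auto
    ultimately show False using four[OF finT indT, of x u z v] xzv T(3) by blast
  qed
  have le: "m \<bullet> x \<le> 1" "m \<bullet> y \<le> 1" "m \<bullet> z \<le> 1" "m \<bullet> v \<le> 1" "m \<bullet> w \<le> 1"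
    using hx hy hz hv hw by auto
  have A: "w \<notin> T \<longrightarrow> y \<in> T \<and> z \<in> T"
  proof
    assume wT: "w \<notin> T"
    hence mw: "m \<bullet> w \<le> 0" using hw by auto
    have z1: "m \<bullet> z = 1" using mw hu eu le(3) by linarith
    have zT: "z \<in> T" using hz z1 by auto
    have yT: "y \<in> T"
    proof (rule ccontr)
      assume "y \<notin> T"
      hence "m \<bullet> y \<le> 0" using hy by auto
      hence x1: "m \<bullet> x = 1" using z1 ez le(1) by linarith
      hence "x \<in> T" using hx by auto
      have "m \<bullet> w = 0" using z1 hu eu by linarith
      hence "m \<bullet> v = 1" using x1 ev by linarith
      hence "v \<in> T" using hv by auto
      thus False using bad zT \<open>x \<in> T\<close> by blast
    qed
    show "y \<in> T \<and> z \<in> T" using yT zT by blast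
  qed
  have B: "y \<notin> T \<longrightarrow> z \<notin> T"
  proof (intro impI notI)
    assume yT: "y \<notin> T" and zT: "z \<in> T"
    have z1: "m \<bullet> z = 1" using hz zT by auto
    have "m \<bullet> y \<le> 0" using hy yT by auto
    hence x1: "m \<bullet> x = 1" using z1 ez le(1) by linarith
    hence "x \<in> T" using hx by auto
    have "m \<bullet> w = 0" using z1 hu eu by linarith
    hence "m \<bullet> v = 1" using x1 ev by linarith
    hence "v \<in> T" using hv by auto
    thus False using bad zT \<open>x \<in> T\<close> by blast
  qed
  show ?thesis using A B by blast
qed

lemma prim_rel2_facts:
  fixes \<Sigma> :: "(real^'n) set set"
  assumes "prim_rel2 \<Sigma> x y z"
  shows "x \<noteq> y" "x \<in> gens \<Sigma>" "y \<in> gens \<Sigma>" "z \<in> gens \<Sigma>" "z = x + y" "{z} \<in> \<Sigma>"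
proof -
  have h: "x \<noteq> y \<and> primitive_relation \<Sigma> {x, y} {z} (\<lambda>_. 1)"
    using assms[unfolded prim_rel2_def] .
  then show xy: "x \<noteq> y" by (rule conjunct1)
  from h have pr: "primitive_relation \<Sigma> {x, y} {z} (\<lambda>_. 1)" by (rule conjunct2)
  have pr2: "primitive_collection \<Sigma> {x, y} \<and> {z} \<in> \<Sigma> \<and>
     (\<forall>y\<in>{z}. (\<lambda>_. 1::nat) y > 0) \<and> (\<Sum>x\<in>{x,y}. x) = (\<Sum>y\<in>{z}. of_nat ((\<lambda>_. 1::nat) y) *\<^sub>R y)"
    using pr[unfolded primitive_relation_def] .
  have pc: "{x, y} \<subseteq> gens \<Sigma>" using pr2 unfolding primitive_collection_def by blast
  then show "x \<in> gens \<Sigma>" "y \<in> gens \<Sigma>" by auto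
  show zS: "{z} \<in> \<Sigma>" using pr2 by blast
  then show "z \<in> gens \<Sigma>" unfolding gens_def by blast
  have "(\<Sum>x\<in>{x,y}. x) = (\<Sum>y\<in>{z}. of_nat ((\<lambda>_. 1::nat) y) *\<^sub>R y)" using pr2 by blast
  then show "z = x + y" using xy by simp
qed

lemma main1:
  fixes \<Sigma> :: "(real^'n) set set"
  assumes fano: "toric_fano \<Sigma>" and r1: "prim_rel2 \<Sigma> x y z" and r2: "prim_rel2 \<Sigma> x w v" and yw: "y \<noteq> w"
  shows "w = - x - y \<and> v = - y"
proof -
  have fan: "smooth_complete_fan \<Sigma>" using fano by (rule fano_fan)
  note f1 = prim_rel2_facts[OF r1] and f2 = prim_rel2_facts[OF r2]
  have nx: "x \<noteq> 0" using gens_facts(1)[OF fan f1(2)] .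
  have ny: "y \<noteq> 0" using gens_facts(1)[OF fan f1(3)] .
  have nw: "w \<noteq> 0" using gens_facts(1)[OF fan f2(3)] .
  have nz: "z \<noteq> 0" using gens_facts(1)[OF fan f1(4)] .
  have nv: "v \<noteq> 0" using gens_facts(1)[OF fan f2(4)] .
  have lz: "lattice_pt z" using gens_facts(2)[OF fan f1(4)] .
  have lw: "lattice_pt w" using gens_facts(2)[OF fan f2(3)] .
  define p where "p = z + w"
  have lp: "lattice_pt p" using lz lw unfolding p_def lattice_pt_def by auto
  obtain S where S: "S \<in> \<Sigma>" "card S = CARD('n)" "p \<in> cone_of S" using exists_max[OF fan] by blast
  have finS: "finite S" and indS: "independent S" using fan_cone[OF fan S(1)] by auto
  obtain c where c: "p = (\<Sum>s\<in>S. c s *\<^sub>R s)" "\<forall>s\<in>S. c s \<ge> 0" using S(3) unfolding cone_of_def by blast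
  have sp: "p \<in> span S" using max_span[OF fan S(1,2)] by simp
  obtain d :: "real^'n \<Rightarrow> int" where d: "p = (\<Sum>s\<in>S. of_int (d s) *\<^sub>R s)"
    using fan_cone(4)[OF fan S(1) lp sp] by (elim exE)
  have cd: "c s = of_int (d s)" if "s \<in> S" for s
    using indep_coeff[OF finS indS, of c "\<lambda>s. of_int (d s)" s] c(1) d that by simp
  have dnn: "\<forall>s\<in>S. d s \<ge> 0"
  proof
    fix s assume s: "s \<in> S"
    have "c s \<ge> 0" using c(2) s by blast
    hence "real_of_int (d s) \<ge> 0" using cd[OF s] by simp
    thus "d s \<ge> 0" by simp
  qed
  obtain m where m: "\<forall>g\<in>gens \<Sigma>. (g \<in> S \<longrightarrow> m \<bullet> g = 1) \<and> (g \<notin> S \<longrightarrow> m \<bullet> g \<le> 0)"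
    and mlin: "\<forall>c. m \<bullet> (\<Sum>s\<in>S. c s *\<^sub>R s) = (\<Sum>s\<in>S. c s)"
    using fano_m[OF fano S(1,2)] by blast
  define K where "K = (\<Sum>s\<in>S. d s)"
  have "m \<bullet> p = (\<Sum>s\<in>S. real_of_int (d s))" using mlin d by simp
  hence mp: "m \<bullet> p = of_int K" unfolding K_def by simp
  have le1: "m \<bullet> g \<le> 1" if "g \<in> gens \<Sigma>" for g
    using m that by (cases "g \<in> S") auto
  have in1: "g \<in> S" if "g \<in> gens \<Sigma>" "m \<bullet> g = 1" for g
    using m that by (cases "g \<in> S") auto
  have mzw: "m \<bullet> p = m \<bullet> z + m \<bullet> w" unfolding p_def by (simp add: inner_add_right)
  have pyv: "p = y + v" unfolding p_def using f1(5) f2(5) by (simp add: algebra_simps)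
  have myv: "m \<bullet> p = m \<bullet> y + m \<bullet> v" unfolding pyv by (simp add: inner_add_right)
  have "real_of_int K \<le> 2" using mp mzw le1[OF f1(4)] le1[OF f2(3)] by linarith
  hence K2: "K \<le> 2" by simp
  have K0: "K \<ge> 0" unfolding K_def using dnn by (simp add: sum_nonneg)
  consider "K = 0" | "K = 1" | "K = 2" using K0 K2 by linarith
  then show ?thesis
  proof cases
    case 1
    hence "\<forall>s\<in>S. d s = 0" using sum_nonneg_eq_0_iff[OF finS, of d] dnn unfolding K_def by auto
    hence "p = 0" using d by simp
    hence wz: "w = - z" unfolding p_def by (metis add.commute add_eq_0_iff2)
    hence "w = - x - y" using f1(5) by simp
    moreover have "v = - y" using f2(5) \<open>w = - x - y\<close> by simp
    ultimately show ?thesis by simp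
  next
    case 3
    hence "m \<bullet> z + m \<bullet> w = 2" "m \<bullet> y + m \<bullet> v = 2" using mp mzw myv by auto
    hence "m \<bullet> z = 1" "m \<bullet> w = 1" "m \<bullet> y = 1" "m \<bullet> v = 1"
      using le1[OF f1(4)] le1[OF f2(3)] le1[OF f1(3)] le1[OF f2(4)] by linarith+
    hence "z \<in> S" "w \<in> S" "y \<in> S" "v \<in> S"
      using in1[OF f1(4)] in1[OF f2(3)] in1[OF f1(3)] in1[OF f2(4)] by auto
    moreover have "z + w = y + v" using pyv unfolding p_def .
    moreover have "z \<noteq> y" using f1(5) nx by auto
    moreover have "z \<noteq> v" using f1(5) f2(5) yw by auto
    ultimately show ?thesis using four[OF finS indS, of z w y v] by blast
  next
    case 2
    have "\<exists>s\<in>S. d s \<noteq> 0"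
    proof (rule ccontr)
      assume "\<not> ?thesis"
      hence "K = 0" unfolding K_def by simp
      thus False using 2 by simp
    qed
    then obtain u where uS: "u \<in> S" and du: "d u \<noteq> 0" by blast
    have "K = d u + (\<Sum>s\<in>S - {u}. d s)" unfolding K_def using sum.remove[OF finS uS] .
    moreover have "(\<Sum>s\<in>S - {u}. d s) \<ge> 0" using dnn by (intro sum_nonneg) auto
    moreover have "d u \<ge> 1" using du dnn uS by force
    ultimately have du1: "d u = 1" and rest: "(\<Sum>s\<in>S - {u}. d s) = 0" using 2 by linarith+
    have "\<forall>s\<in>S - {u}. d s = 0" using sum_nonneg_eq_0_iff[of "S - {u}" d] finS dnn rest by auto
    hence "(\<Sum>s\<in>S - {u}. of_int (d s) *\<^sub>R s) = (0::real^'n)" by simp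
    hence pu: "p = u" using d sum.remove[OF finS uS, of "\<lambda>s. of_int (d s) *\<^sub>R s"] du1 by simp
    have ug: "u \<in> gens \<Sigma>" using uS S(1) unfolding gens_def by blast
    have eu: "u = z + w" using pu unfolding p_def by simp
    note US = ustep[OF fano f1(2) f1(3) f2(3) f1(4) f2(4) ug f1(5) f2(5) eu ny nw]
    have uy: "u \<noteq> y"
    proof
      assume "u = y" hence "x + w = 0" using eu f1(5) by (simp add: algebra_simps)
      thus False using nv f2(5) by simp
    qed
    have uw: "u \<noteq> w" using eu nz by auto
    have zy: "z \<noteq> y" using f1(5) nx by auto
    have claimA: "w \<in> T" if T: "T \<in> \<Sigma>" "card T = CARD('n)" "u \<in> T" for T
    proof (rule ccontr)
      assume wT: "w \<notin> T"
      have yz: "y \<in> T" "z \<in> T" using US[OF T] wT by auto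
      obtain T' where T': "T' \<in> \<Sigma>" "card T' = CARD('n)" "T - {y} \<subseteq> T'" "y \<notin> T'"
        using wall[OF fan T(1,2) yz(1)] by blast
      have "u \<in> T'" using T(3) T'(3) uy by auto
      moreover have "z \<in> T'" using yz(2) T'(3) zy by auto
      ultimately show False using US[OF T'(1,2)] T'(4) by blast
    qed
    have wS: "w \<in> S" using claimA[OF S(1,2) uS] .
    obtain S' where S': "S' \<in> \<Sigma>" "card S' = CARD('n)" "S - {w} \<subseteq> S'" "w \<notin> S'"
      using wall[OF fan S(1,2) wS] by blast
    have "u \<in> S'" using uS S'(3) uw by auto
    then show ?thesis using claimA[OF S'(1,2)] S'(4) by blast
  qed
qed

lemma deg1:
  fixes \<Sigma> :: "(real^'n) set set"
  assumes fan: "smooth_complete_fan \<Sigma>" and pc: "primitive_collection \<Sigma> P" and c2: "card P = 2"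
    and dg: "prim_degree \<Sigma> P 1" and xP: "x \<in> P"
  shows "\<exists>y z. P = {x, y} \<and> x \<noteq> y \<and> prim_rel2 \<Sigma> x y z"
proof -
  obtain a b where ab: "P = {a, b}" "a \<noteq> b" using c2 unfolding card_2_iff by blast
  obtain y where y: "P = {x, y}" "x \<noteq> y"
  proof (cases "x = a")
    case True thus ?thesis using that ab by blast
  next
    case False
    hence "x = b" using xP ab by blast
    have "P = {x, a}" using ab \<open>x = b\<close> by (simp add: insert_commute)
    moreover have "x \<noteq> a" using ab \<open>x = b\<close> by simp
    ultimately show ?thesis using that by blast
  qed
  obtain K a' where pr: "primitive_relation \<Sigma> P K a'" and d: "1 = int (card P) - (\<Sum>y\<in>K. int (a' y))"
    using dg unfolding prim_degree_def by blast
  have pr2: "primitive_collection \<Sigma> P \<and> K \<in> \<Sigma> \<and>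
     (\<forall>y\<in>K. a' y > 0) \<and> (\<Sum>x\<in>P. x) = (\<Sum>y\<in>K. of_nat (a' y) *\<^sub>R y)"
    using pr[unfolded primitive_relation_def] .
  have KS: "K \<in> \<Sigma>" and apos: "\<forall>y\<in>K. a' y > 0"
    and sumeq: "(\<Sum>x\<in>P. x) = (\<Sum>y\<in>K. of_nat (a' y) *\<^sub>R y)" using pr2 by blast+
  have finK: "finite K" using fan_cone(1)[OF fan KS] .
  have sK: "(\<Sum>k\<in>K. int (a' k)) = 1" using d c2 by simp
  have "K \<noteq> {}" using sK by auto
  then obtain z where zK: "z \<in> K" by blast
  have "(\<Sum>k\<in>K. int (a' k)) = int (a' z) + (\<Sum>k\<in>K - {z}. int (a' k))" using sum.remove[OF finK zK] .
  moreover have "(\<Sum>k\<in>K - {z}. int (a' k)) \<ge> 0" by (intro sum_nonneg) auto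
  moreover have "a' z \<ge> 1" using apos zK by force
  ultimately have az: "a' z = 1" and rest: "(\<Sum>k\<in>K - {z}. int (a' k)) = 0" using sK by linarith+
  have "K - {z} = {}"
  proof (rule ccontr)
    assume ne: "K - {z} \<noteq> {}"
    have "0 < (\<Sum>k\<in>K - {z}. int (a' k))" using finK ne apos by (intro sum_pos) auto
    thus False using rest by simp
  qed
  hence Kz: "K = {z}" using zK by blast
  have xyz: "x + y = z" using sumeq y Kz az by simp
  have "primitive_relation \<Sigma> {x, y} {z} (\<lambda>_. 1)"
    unfolding primitive_relation_def using pc y KS Kz xyz by simp
  hence "prim_rel2 \<Sigma> x y z" unfolding prim_rel2_def using y(2) by blast
  thus ?thesis using y by blast
qed

theorem lemma2p3:
  fixes \<Sigma> :: "(real^'n) set set" and x :: "real^'n"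
  assumes "toric_fano \<Sigma>"
  shows "(\<forall>y z w v. prim_rel2 \<Sigma> x y z \<and> prim_rel2 \<Sigma> x w v \<and> (y, z) \<noteq> (w, v)
              \<longrightarrow> w = - x - y \<and> v = - y)
       \<and> card {P. x \<in> P \<and> primitive_collection \<Sigma> P \<and> card P = 2 \<and> prim_degree \<Sigma> P 1} \<le> 2
       \<and> (\<forall>y w. y \<noteq> w \<and> primitive_collection \<Sigma> {x, y} \<and> card {x, y} = 2 \<and> prim_degree \<Sigma> {x, y} 1
              \<and> primitive_collection \<Sigma> {x, w} \<and> card {x, w} = 2 \<and> prim_degree \<Sigma> {x, w} 1
              \<longrightarrow> prim_rel2 \<Sigma> x y (- w) \<and> prim_rel2 \<Sigma> x w (- y))"
proof -
  note fano = assms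
  have fan: "smooth_complete_fan \<Sigma>" using fano by (rule fano_fan)
  have P1: "\<forall>y z w v. prim_rel2 \<Sigma> x y z \<and> prim_rel2 \<Sigma> x w v \<and> (y, z) \<noteq> (w, v)
              \<longrightarrow> w = - x - y \<and> v = - y"
  proof (intro allI impI)
    fix y z w v assume h: "prim_rel2 \<Sigma> x y z \<and> prim_rel2 \<Sigma> x w v \<and> (y, z) \<noteq> (w, v)"
    have r1: "prim_rel2 \<Sigma> x y z" and r2: "prim_rel2 \<Sigma> x w v" and ne: "(y, z) \<noteq> (w, v)" using h by blast+
    have "y \<noteq> w"
    proof
      assume "y = w"
      hence "z = v" using prim_rel2_facts(5)[OF r1] prim_rel2_facts(5)[OF r2] by simp
      thus False using ne \<open>y = w\<close> by simp
    qed
    thus "w = - x - y \<and> v = - y" using main1[OF fano r1 r2] by blast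
  qed
  define Q where "Q = {P. x \<in> P \<and> primitive_collection \<Sigma> P \<and> card P = 2 \<and> prim_degree \<Sigma> P 1}"
  have inQ: "\<exists>y z. P = {x, y} \<and> x \<noteq> y \<and> prim_rel2 \<Sigma> x y z" if "P \<in> Q" for P
  proof -
    have "x \<in> P" "primitive_collection \<Sigma> P" "card P = 2" "prim_degree \<Sigma> P 1"
      using that unfolding Q_def by blast+
    thus ?thesis using deg1[OF fan] by blast
  qed
  have P2: "card Q \<le> 2"
  proof (cases "Q = {}")
    case True thus ?thesis by simp
  next
    case False
    then obtain P0 where "P0 \<in> Q" by blast
    then obtain y0 z0 where r0: "prim_rel2 \<Sigma> x y0 z0" using inQ by blast
    have sub: "Q \<subseteq> {{x, y0}, {x, - x - y0}}"
    proof
      fix P assume "P \<in> Q"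
      then obtain y z where P: "P = {x, y}" "prim_rel2 \<Sigma> x y z" using inQ by blast
      show "P \<in> {{x, y0}, {x, - x - y0}}"
      proof (cases "y = y0")
        case True thus ?thesis using P by simp
      next
        case False
        hence "y = - x - y0" using main1[OF fano r0 P(2)] by blast
        thus ?thesis using P by simp
      qed
    qed
    have "card Q \<le> card {{x, y0}, {x, - x - y0}}" using sub by (intro card_mono) auto
    also have "\<dots> \<le> 2" by (cases "{x, y0} = {x, - x - y0}") auto
    finally show ?thesis .
  qed
  have P3: "\<forall>y w. y \<noteq> w \<and> primitive_collection \<Sigma> {x, y} \<and> card {x, y} = 2 \<and> prim_degree \<Sigma> {x, y} 1
              \<and> primitive_collection \<Sigma> {x, w} \<and> card {x, w} = 2 \<and> prim_degree \<Sigma> {x, w} 1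
              \<longrightarrow> prim_rel2 \<Sigma> x y (- w) \<and> prim_rel2 \<Sigma> x w (- y)"
  proof (intro allI impI)
    fix y w assume h: "y \<noteq> w \<and> primitive_collection \<Sigma> {x, y} \<and> card {x, y} = 2 \<and> prim_degree \<Sigma> {x, y} 1
              \<and> primitive_collection \<Sigma> {x, w} \<and> card {x, w} = 2 \<and> prim_degree \<Sigma> {x, w} 1"
    have yw: "y \<noteq> w" using h by blast
    have "\<exists>y' z. {x, y} = {x, y'} \<and> x \<noteq> y' \<and> prim_rel2 \<Sigma> x y' z"
      using h by (intro deg1[OF fan]) auto
    then obtain y' z where a: "{x, y} = {x, y'}" "x \<noteq> y'" "prim_rel2 \<Sigma> x y' z" by blast
    have "y' \<in> {x, y}" using a(1) by blast
    hence "y' = y" using a(2) by blast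
    hence r1: "prim_rel2 \<Sigma> x y z" using a(3) by simp
    have "\<exists>w' v. {x, w} = {x, w'} \<and> x \<noteq> w' \<and> prim_rel2 \<Sigma> x w' v"
      using h by (intro deg1[OF fan]) auto
    then obtain w' v where b: "{x, w} = {x, w'}" "x \<noteq> w'" "prim_rel2 \<Sigma> x w' v" by blast
    have "w' \<in> {x, w}" using b(1) by blast
    hence "w' = w" using b(2) by blast
    hence r2: "prim_rel2 \<Sigma> x w v" using b(3) by simp
    have m: "w = - x - y \<and> v = - y" using main1[OF fano r1 r2 yw] .
    have "z = - w" using m prim_rel2_facts(5)[OF r1] by simp
    moreover have "v = - y" using m by blast
    ultimately show "prim_rel2 \<Sigma> x y (- w) \<and> prim_rel2 \<Sigma> x w (- y)" using r1 r2 by simp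
  qed
  show ?thesis
  proof (intro conjI)
    show "\<forall>y z w v. prim_rel2 \<Sigma> x y z \<and> prim_rel2 \<Sigma> x w v \<and> (y, z) \<noteq> (w, v)
              \<longrightarrow> w = - x - y \<and> v = - y" by (rule P1)
    show "card {P. x \<in> P \<and> primitive_collection \<Sigma> P \<and> card P = 2 \<and> prim_degree \<Sigma> P 1} \<le> 2"
      using P2 unfolding Q_def .
    show "\<forall>y w. y \<noteq> w \<and> primitive_collection \<Sigma> {x, y} \<and> card {x, y} = 2 \<and> prim_degree \<Sigma> {x, y} 1
              \<and> primitive_collection \<Sigma> {x, w} \<and> card {x, w} = 2 \<and> prim_degree \<Sigma> {x, w} 1
              \<longrightarrow> prim_rel2 \<Sigma> x y (- w) \<and> prim_rel2 \<Sigma> x w (- y)" by (rule P3)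
  qed
qed

end
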